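(* For $a\in\mathbb{C}\setminus\{0\}$ let $f_a(z)=\dfrac{z^2-a}{z^2+a}$. If $a\neq\pm1$, then $\mathrm{Deck}(f_a^k)\cong V_4$ for all $k\ge2$ (explicitly, $\mathrm{Deck}(f_a^2)=\{z,\,-z,\,a/z,\,-a/z\}$).
   Context: $\mathrm{Deck}(F)=\{\tau \text{ Möbius} : F\circ\tau=F\}$; $V_4$ is the Klein four-group; $f_a^k$ is the $k$-th iterate of $f_a$. *)

theory Defs
  imports Complex_Main "HOL-Algebra.Group"
begin

text \<open>The Riemann sphere: None is the point at infinity.\<close>
type_synonym sphere = "complex option"

definition moebius_app :: "complex \<Rightarrow> complex \<Rightarrow> complex \<Rightarrow> complex \<Rightarrow> sphere \<Rightarrow> sphere" where
  "moebius_app a b c d w =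
     (case w of
        Some z \<Rightarrow> (if c * z + d \<noteq> 0 then Some ((a * z + b) / (c * z + d)) else None)
      | None \<Rightarrow> (if c \<noteq> 0 then Some (a / c) else None))"

definition is_moebius :: "(sphere \<Rightarrow> sphere) \<Rightarrow> bool" where
  "is_moebius \<tau> \<longleftrightarrow> (\<exists>a b c d. a * d - b * c \<noteq> 0 \<and> \<tau> = moebius_app a b c d)"

definition f_map :: "complex \<Rightarrow> sphere \<Rightarrow> sphere" where
  "f_map a w =
     (case w of
        Some z \<Rightarrow> (if z^2 + a \<noteq> 0 then Some ((z^2 - a) / (z^2 + a)) else None)
      | None \<Rightarrow> Some 1)"

definition Deck :: "(sphere \<Rightarrow> sphere) \<Rightarrow> (sphere \<Rightarrow> sphere) set" where
  "Deck F = {\<tau>. is_moebius \<tau> \<and> F \<circ> \<tau> = F}"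

definition Deck_group :: "(sphere \<Rightarrow> sphere) \<Rightarrow> (sphere \<Rightarrow> sphere) monoid" where
  "Deck_group F = \<lparr>carrier = Deck F, monoid.mult = (\<circ>), one = id\<rparr>"

definition V4 :: "(bool \<times> bool) monoid" where
  "V4 = \<lparr>carrier = UNIV, monoid.mult = (\<lambda>(p, q) (r, s). (p \<noteq> r, q \<noteq> s)), one = (False, False)\<rparr>"

end

theory Submission
  imports Defs "HOL-Computational_Algebra.Polynomial" "HOL-Analysis.Analysis"
begin



definition RF :: "(complex \<Rightarrow> complex) \<Rightarrow> bool" where
  "RF h \<longleftrightarrow> (\<exists>P Q. Q \<noteq> 0 \<and> (MOST z. h z = poly P z / poly Q z))"

lemma MOST_poly_nz: "Q \<noteq> 0 \<Longrightarrow> MOST z. poly Q z \<noteq> (0::complex)"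
  by (simp add: MOST_iff_cofinite poly_roots_finite)

lemma MOST_contra: "MOST z::complex. P z \<Longrightarrow> MOST z. \<not> P z \<Longrightarrow> False"
proof -
  assume "MOST z::complex. P z" "MOST z. \<not> P z"
  then have "MOST z::complex. False" by (rule MOST_rev_mp[OF MOST_conjI]) auto
  then show False by (simp add: infinite_UNIV_char_0)
qed

lemma MOST_infinite: "MOST z::complex. P z \<Longrightarrow> infinite {z. P z}"
proof
  assume "MOST z::complex. P z" "finite {z. P z}"
  then have "MOST z. \<not> P z" by (simp add: MOST_iff_cofinite)
  with \<open>MOST z::complex. P z\<close> show False by (rule MOST_contra)
qed

lemma RF_cong: assumes "RF h" "MOST z. k z = h z" shows "RF k"
proof -
  obtain P Q where q: "Q \<noteq> 0" and e: "MOST z. h z = poly P z / poly Q z"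
    using assms(1) unfolding RF_def by blast
  have "MOST z. k z = poly P z / poly Q z" using MOST_conjI[OF assms(2) e] by (rule MOST_mono) simp
  then show ?thesis unfolding RF_def using q by blast
qed

lemma RF_const: "RF (\<lambda>z. c)"
  unfolding RF_def by (rule exI[of _ "[:c:]"], rule exI[of _ 1]) auto

lemma RF_id: "RF (\<lambda>z. z)"
  unfolding RF_def by (rule exI[of _ "[:0,1:]"], rule exI[of _ 1]) auto

lemma RF_mult: assumes "RF h" "RF k" shows "RF (\<lambda>z. h z * k z)"
proof -
  obtain P1 Q1 P2 Q2 where q: "Q1 \<noteq> 0" "Q2 \<noteq> 0" and
    e: "MOST z. h z = poly P1 z / poly Q1 z" "MOST z. k z = poly P2 z / poly Q2 z"
    using assms unfolding RF_def by blast
  have "MOST z. h z * k z = poly (P1*P2) z / poly (Q1*Q2) z"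
    using MOST_conjI[OF e] by (rule MOST_mono) simp
  then show ?thesis unfolding RF_def using q by (intro exI[of _ "P1*P2"] exI[of _ "Q1*Q2"]) auto
qed

lemma RF_add: assumes "RF h" "RF k" shows "RF (\<lambda>z. h z + k z)"
proof -
  obtain P1 Q1 P2 Q2 where q: "Q1 \<noteq> 0" "Q2 \<noteq> 0" and
    e: "MOST z. h z = poly P1 z / poly Q1 z" "MOST z. k z = poly P2 z / poly Q2 z"
    using assms unfolding RF_def by blast
  have "MOST z. h z + k z = poly (P1*Q2 + P2*Q1) z / poly (Q1*Q2) z"
    using MOST_conjI[OF MOST_conjI[OF e] MOST_conjI[OF MOST_poly_nz[OF q(1)] MOST_poly_nz[OF q(2)]]]
    by (rule MOST_mono) (simp add: field_simps)
  then show ?thesis unfolding RF_def using q by (intro exI[of _ "P1*Q2 + P2*Q1"] exI[of _ "Q1*Q2"]) auto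
qed

lemma RF_uminus: assumes "RF h" shows "RF (\<lambda>z. - h z)"
proof -
  have "RF (\<lambda>z. (-1) * h z)" by (rule RF_mult[OF RF_const assms])
  then show ?thesis by (rule RF_cong) simp
qed

lemma RF_diff: assumes "RF h" "RF k" shows "RF (\<lambda>z. h z - k z)"
proof -
  have "RF (\<lambda>z. h z + - k z)" by (rule RF_add[OF assms(1) RF_uminus[OF assms(2)]])
  then show ?thesis by (rule RF_cong) simp
qed

lemma RF_divide: assumes "RF h" "RF k" shows "RF (\<lambda>z. h z / k z)"
proof -
  obtain P1 Q1 P2 Q2 where q: "Q1 \<noteq> 0" "Q2 \<noteq> 0" and
    e: "MOST z. h z = poly P1 z / poly Q1 z" "MOST z. k z = poly P2 z / poly Q2 z"
    using assms unfolding RF_def by blast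
  show ?thesis
  proof (cases "P2 = 0")
    case True
    have "MOST z. h z / k z = poly 0 z / poly 1 z" using e(2) by (rule MOST_mono) (simp add: True)
    then show ?thesis unfolding RF_def by (intro exI[of _ 0] exI[of _ 1]) auto
  next
    case False
    have "MOST z. h z / k z = poly (P1*Q2) z / poly (Q1*P2) z"
      using MOST_conjI[OF MOST_conjI[OF e] MOST_conjI[OF MOST_poly_nz[OF q(1)] MOST_poly_nz[OF q(2)]]]
      by (rule MOST_mono) (simp add: field_simps)
    then show ?thesis unfolding RF_def using q False by (intro exI[of _ "P1*Q2"] exI[of _ "Q1*P2"]) auto
  qed
qed

lemma RF_power2: assumes "RF h" shows "RF (\<lambda>z. (h z)^2)"
proof -
  have "RF (\<lambda>z. h z * h z)" by (rule RF_mult[OF assms assms])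
  then show ?thesis by (rule RF_cong) (simp add: power2_eq_square)
qed

lemma RF_zero_or_nz: assumes "RF h" shows "(MOST z. h z = 0) \<or> (MOST z. h z \<noteq> 0)"
proof -
  obtain P Q where q: "Q \<noteq> 0" and e: "MOST z. h z = poly P z / poly Q z"
    using assms unfolding RF_def by blast
  show ?thesis
  proof (cases "P = 0")
    case True then show ?thesis using e by (auto elim: MOST_mono)
  next
    case False
    have "MOST z. h z \<noteq> 0"
      using MOST_conjI[OF e MOST_conjI[OF MOST_poly_nz[OF q] MOST_poly_nz[OF False]]]
      by (rule MOST_mono) simp
    then show ?thesis ..
  qed
qed

lemma RF_prod_zero: assumes "RF h" "RF k" "MOST z. h z * k z = 0"
  shows "(MOST z. h z = 0) \<or> (MOST z. k z = 0)"
proof (rule ccontr)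
  assume n: "\<not> ?thesis"
  have 1: "MOST z. h z \<noteq> 0" using RF_zero_or_nz[OF assms(1)] n by blast
  have 2: "MOST z. k z \<noteq> 0" using RF_zero_or_nz[OF assms(2)] n by blast
  have "MOST z. h z * k z \<noteq> 0" using MOST_conjI[OF 1 2] by (rule MOST_mono) simp
  from MOST_contra[OF assms(3) this] show False .
qed

lemma RF_sq: assumes "RF h" "RF k" "MOST z. (h z)^2 = (k z)^2"
  shows "(MOST z. h z = k z) \<or> (MOST z. h z = - k z)"
proof -
  have "MOST z. (h z - k z) * (h z + k z) = 0"
    using assms(3) by (rule MOST_mono) (simp add: algebra_simps power2_eq_square)
  from RF_prod_zero[OF RF_diff[OF assms(1,2)] RF_add[OF assms(1,2)] this]
  show ?thesis by (auto elim: MOST_mono simp: eq_neg_iff_add_eq_0)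
qed

definition mob :: "complex \<Rightarrow> complex \<Rightarrow> complex \<Rightarrow> complex \<Rightarrow> complex \<Rightarrow> complex" where
  "mob \<alpha> \<beta> \<gamma> \<delta> z = (\<alpha>*z+\<beta>)/(\<gamma>*z+\<delta>)"

lemma mob_inj: assumes "\<alpha>*\<delta> - \<beta>*\<gamma> \<noteq> 0" shows "inj_on (mob \<alpha> \<beta> \<gamma> \<delta>) {z. \<gamma>*z+\<delta> \<noteq> 0}"
proof (rule inj_onI)
  fix x y assume x: "x \<in> {z. \<gamma>*z+\<delta> \<noteq> 0}" and y: "y \<in> {z. \<gamma>*z+\<delta> \<noteq> 0}"
    and e: "mob \<alpha> \<beta> \<gamma> \<delta> x = mob \<alpha> \<beta> \<gamma> \<delta> y"
  then have "(\<alpha>*x+\<beta>)*(\<gamma>*y+\<delta>) = (\<alpha>*y+\<beta>)*(\<gamma>*x+\<delta>)"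
    by (simp add: mob_def field_simps)
  then have "(\<alpha>*\<delta> - \<beta>*\<gamma>) * (x - y) = 0" by (simp add: algebra_simps)
  with assms show "x = y" by simp
qed

lemma finite_denom0: assumes "\<alpha>*\<delta> - \<beta>*\<gamma> \<noteq> 0" shows "finite {z::complex. \<gamma>*z+\<delta> = 0}"
proof -
  have "[:\<delta>, \<gamma>:] \<noteq> 0" using assms by auto
  from poly_roots_finite[OF this] show ?thesis by (simp add: algebra_simps)
qed

lemma MOST_denom: "\<alpha>*\<delta> - \<beta>*\<gamma> \<noteq> 0 \<Longrightarrow> MOST z::complex. \<gamma>*z+\<delta> \<noteq> 0"
  using finite_denom0 by (simp add: MOST_iff_cofinite)

lemma MOST_mob: assumes d: "\<alpha>*\<delta> - \<beta>*\<gamma> \<noteq> 0" and P: "MOST z. P z"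
  shows "MOST z. P (mob \<alpha> \<beta> \<gamma> \<delta> z)"
proof -
  have "{z. \<not> P (mob \<alpha> \<beta> \<gamma> \<delta> z)} \<subseteq> {z. \<gamma>*z+\<delta> = 0} \<union>
     (mob \<alpha> \<beta> \<gamma> \<delta> -` {x. \<not> P x} \<inter> {z. \<gamma>*z+\<delta> \<noteq> 0})" by auto
  moreover have "finite (mob \<alpha> \<beta> \<gamma> \<delta> -` {x. \<not> P x} \<inter> {z. \<gamma>*z+\<delta> \<noteq> 0})"
    using P mob_inj[OF d] by (intro finite_vimage_IntI) (auto simp: MOST_iff_cofinite)
  ultimately have "finite {z. \<not> P (mob \<alpha> \<beta> \<gamma> \<delta> z)}"
    by (rule finite_subset[OF _ finite_UnI[OF finite_denom0[OF d]]])
  then show ?thesis by (simp add: MOST_iff_cofinite)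
qed

lemma hom_aux: fixes D :: complex assumes "D \<noteq> 0"
  shows "c + x/D*(p/D^k) = (c*D^(Suc k) + x*p)/(D^(Suc k))"
proof -
  have E: "D^(Suc k) \<noteq> 0" using assms by simp
  have "x/D*(p/D^k) = (x*p)/D^(Suc k)" by (simp add: power_Suc)
  then show ?thesis using E by (simp add: add_divide_eq_iff)
qed

lemma poly_lin: "poly [:\<delta>,\<gamma>:] z = \<gamma>*z+(\<delta>::complex)" by simp

lemma hom_poly: "\<exists>P' k. \<forall>z. \<gamma>*z+\<delta> \<noteq> 0 \<longrightarrow> poly P (mob \<alpha> \<beta> \<gamma> \<delta> z) = poly P' z / (\<gamma>*z+\<delta>)^k"
proof (induction P)
  case 0
  have "\<forall>z. \<gamma>*z+\<delta> \<noteq> 0 \<longrightarrow> poly 0 (mob \<alpha> \<beta> \<gamma> \<delta> z) = poly 0 z / (\<gamma>*z+\<delta>)^0" by simp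
  then show ?case by blast
next
  case (pCons c P)
  then obtain P' k where IH: "\<forall>z. \<gamma>*z+\<delta> \<noteq> 0 \<longrightarrow> poly P (mob \<alpha> \<beta> \<gamma> \<delta> z) = poly P' z / (\<gamma>*z+\<delta>)^k"
    by blast
  have "\<forall>z. \<gamma>*z+\<delta> \<noteq> 0 \<longrightarrow> poly (pCons c P) (mob \<alpha> \<beta> \<gamma> \<delta> z) =
      poly (smult c ([:\<delta>,\<gamma>:]^(Suc k)) + [:\<beta>,\<alpha>:] * P') z / (\<gamma>*z+\<delta>)^(Suc k)"
  proof (intro allI impI)
    fix z assume z: "\<gamma>*z+\<delta> \<noteq> 0"
    have m: "mob \<alpha> \<beta> \<gamma> \<delta> z = (\<alpha>*z+\<beta>)/(\<gamma>*z+\<delta>)" by (simp add: mob_def)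
    have pp: "poly P (mob \<alpha> \<beta> \<gamma> \<delta> z) = poly P' z / (\<gamma>*z+\<delta>)^k" using IH z by blast
    have "poly (pCons c P) (mob \<alpha> \<beta> \<gamma> \<delta> z) = c + (\<alpha>*z+\<beta>)/(\<gamma>*z+\<delta>) * (poly P' z / (\<gamma>*z+\<delta>)^k)"
      unfolding poly_pCons pp unfolding m ..
    also have "\<dots> = (c * (\<gamma>*z+\<delta>)^(Suc k) + (\<alpha>*z+\<beta>) * poly P' z) / (\<gamma>*z+\<delta>)^(Suc k)"
      by (rule hom_aux[OF z])
    also have "\<dots> = poly (smult c ([:\<delta>,\<gamma>:]^(Suc k)) + [:\<beta>,\<alpha>:] * P') z / (\<gamma>*z+\<delta>)^(Suc k)"
      by (simp only: poly_add poly_smult poly_mult poly_power poly_lin)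
    finally show "poly (pCons c P) (mob \<alpha> \<beta> \<gamma> \<delta> z) =
      poly (smult c ([:\<delta>,\<gamma>:]^(Suc k)) + [:\<beta>,\<alpha>:] * P') z / (\<gamma>*z+\<delta>)^(Suc k)" .
  qed
  then show ?case by blast
qed

lemma RF_mob: assumes h: "RF h" and d: "\<alpha>*\<delta> - \<beta>*\<gamma> \<noteq> 0"
  shows "RF (\<lambda>z. h (mob \<alpha> \<beta> \<gamma> \<delta> z))"
proof -
  obtain P Q where q: "Q \<noteq> 0" and e: "MOST z. h z = poly P z / poly Q z"
    using h unfolding RF_def by blast
  obtain P' k where P': "\<forall>z. \<gamma>*z+\<delta> \<noteq> 0 \<longrightarrow> poly P (mob \<alpha> \<beta> \<gamma> \<delta> z) = poly P' z / (\<gamma>*z+\<delta>)^k"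
    using hom_poly by blast
  obtain Q' j where Q': "\<forall>z. \<gamma>*z+\<delta> \<noteq> 0 \<longrightarrow> poly Q (mob \<alpha> \<beta> \<gamma> \<delta> z) = poly Q' z / (\<gamma>*z+\<delta>)^j"
    using hom_poly by blast
  have D: "[:\<delta>,\<gamma>:] \<noteq> 0" using d by auto
  have r1: "RF (\<lambda>z. poly P' z / poly ([:\<delta>,\<gamma>:]^k) z)" unfolding RF_def
    using D by (intro exI[of _ P'] exI[of _ "[:\<delta>,\<gamma>:]^k"]) auto
  have r2: "RF (\<lambda>z. poly Q' z / poly ([:\<delta>,\<gamma>:]^j) z)" unfolding RF_def
    using D by (intro exI[of _ Q'] exI[of _ "[:\<delta>,\<gamma>:]^j"]) auto
  have "MOST z. h (mob \<alpha> \<beta> \<gamma> \<delta> z) = (poly P' z / poly ([:\<delta>,\<gamma>:]^k) z) / (poly Q' z / poly ([:\<delta>,\<gamma>:]^j) z)"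
    using MOST_conjI[OF MOST_mob[OF d e] MOST_denom[OF d]]
  proof (rule MOST_mono)
    fix z assume z: "h (mob \<alpha> \<beta> \<gamma> \<delta> z) = poly P (mob \<alpha> \<beta> \<gamma> \<delta> z) / poly Q (mob \<alpha> \<beta> \<gamma> \<delta> z) \<and> \<gamma>*z+\<delta> \<noteq> 0"
    then have "poly P (mob \<alpha> \<beta> \<gamma> \<delta> z) = poly P' z / (\<gamma>*z+\<delta>)^k"
      "poly Q (mob \<alpha> \<beta> \<gamma> \<delta> z) = poly Q' z / (\<gamma>*z+\<delta>)^j" using P' Q' by blast+
    with z show "h (mob \<alpha> \<beta> \<gamma> \<delta> z) = (poly P' z / poly ([:\<delta>,\<gamma>:]^k) z) / (poly Q' z / poly ([:\<delta>,\<gamma>:]^j) z)"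
      by (simp only: poly_power poly_lin)
  qed
  then show ?thesis by (rule RF_cong[OF RF_divide[OF r1 r2]])
qed




definition phi :: "complex \<Rightarrow> complex \<Rightarrow> complex" where
  "phi a w = (w^2 - a)/(w^2 + a)"

fun gi :: "complex \<Rightarrow> nat \<Rightarrow> complex \<Rightarrow> complex" where
  "gi a 0 z = z"
| "gi a (Suc n) z = phi a (gi a n z)"

lemma f_some: "z^2 + a \<noteq> 0 \<Longrightarrow> f_map a (Some z) = Some (phi a z)"
  by (simp add: f_map_def phi_def)
lemma f_some_none: "z^2 + a = 0 \<Longrightarrow> f_map a (Some z) = None"
  by (simp add: f_map_def)
lemma f_none: "f_map a None = Some 1"
  by (simp add: f_map_def)

lemma fib_f: assumes a: "a \<noteq> 0" shows "finite {x. f_map a x = y}"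
proof (cases y)
  case None
  have p: "[:a,0,1:] \<noteq> 0" by simp
  have "{x. f_map a x = y} \<subseteq> Some ` {z. poly [:a,0,1:] z = 0}"
  proof
    fix x assume x: "x \<in> {x. f_map a x = y}"
    show "x \<in> Some ` {z. poly [:a,0,1:] z = 0}"
    proof (cases x)
      case None with x \<open>y = None\<close> show ?thesis by (simp add: f_map_def)
    next
      case (Some z)
      with x \<open>y = None\<close> have "z^2 + a = 0" by (auto simp: f_map_def split: if_splits)
      moreover have "poly [:a,0,1:] z = z^2 + a" by (simp add: power2_eq_square)
      ultimately show ?thesis using Some by auto
    qed
  qed
  then show ?thesis using poly_roots_finite[OF p] finite_subset by blast
next
  case (Some w)
  have p: "[:-a*(1+w), 0, 1-w:] \<noteq> 0" using a by auto
  have "{x. f_map a x = y} \<subseteq> insert None (Some ` {z. poly [:-a*(1+w), 0, 1-w:] z = 0})"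
  proof
    fix x assume x: "x \<in> {x. f_map a x = y}"
    show "x \<in> insert None (Some ` {z. poly [:-a*(1+w), 0, 1-w:] z = 0})"
    proof (cases x)
      case (Some z)
      with x \<open>y = Some w\<close> have nz: "z^2 + a \<noteq> 0" and e: "(z^2 - a)/(z^2+a) = w"
        by (auto simp: f_map_def split: if_splits)
      from e nz have e2: "z^2 - a = w * (z^2 + a)" by (simp add: field_simps)
      have "poly [:-a*(1+w), 0, 1-w:] z = (z^2 - a) - w * (z^2 + a)"
        by (simp add: algebra_simps power2_eq_square)
      also have "\<dots> = 0" using e2 by simp
      finally show ?thesis using Some by auto
    qed simp
  qed
  then show ?thesis using poly_roots_finite[OF p] finite_subset by blast
qed

lemma fib_F: assumes a: "a \<noteq> 0" shows "finite {x. (f_map a ^^ n) x = y}"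
proof (induction n arbitrary: y)
  case 0 then show ?case by simp
next
  case (Suc n)
  have "{x. (f_map a ^^ Suc n) x = y} = (\<Union>s\<in>{s. f_map a s = y}. {x. (f_map a ^^ n) x = s})"
    by auto
  then show ?case using fib_f[OF a] Suc by auto
qed

lemma RF_phi: "RF h \<Longrightarrow> RF (\<lambda>z. phi a (h z))"
  unfolding phi_def by (intro RF_divide RF_diff RF_add RF_power2 RF_const)

lemma RF_g: "RF (gi a n)"
proof (induction n)
  case 0 then show ?case using RF_id by (simp add: fun_eq_iff)
next
  case (Suc n) then show ?case using RF_phi[OF Suc] by simp
qed

lemma phi_neg: "phi a (-z) = phi a z" by (simp add: phi_def)

lemma g_neg: "gi a (Suc n) (-z) = gi a (Suc n) z"
  by (induction n) (auto simp: phi_neg)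

locale fa =
  fixes a :: complex
  assumes a0: "a \<noteq> 0" and a1: "a \<noteq> 1" and am1: "a \<noteq> -1"
begin

abbreviation F where "F n \<equiv> f_map a ^^ n"

lemma nz_from_link:
  assumes L: "MOST z. F n (Some z) = Some (gi a n z)"
  shows "MOST z. (gi a n z)^2 + a \<noteq> 0"
proof -
  { assume Z: "MOST z. (gi a n z)^2 + a = 0"
    have "MOST z. F (Suc n) (Some z) = None"
      using MOST_conjI[OF L Z] by (rule MOST_mono) (simp add: f_some_none)
    then have "infinite {z. F (Suc n) (Some z) = None}" by (rule MOST_infinite)
    moreover have "finite (Some -` {x. F (Suc n) x = None})"
      by (rule finite_vimageI[OF fib_F[OF a0]]) simp
    ultimately have False by (simp add: vimage_def)
  }
  moreover have "RF (\<lambda>z. (gi a n z)^2 + a)" by (intro RF_add RF_power2 RF_g RF_const)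
  ultimately show ?thesis using RF_zero_or_nz by blast
qed

lemma link: "MOST z. F n (Some z) = Some (gi a n z)"
proof (induction n)
  case 0 then show ?case by simp
next
  case (Suc n)
  show ?case using MOST_conjI[OF Suc nz_from_link[OF Suc]]
    by (rule MOST_mono) (simp only: funpow.simps comp_apply gi.simps, simp add: f_some)
qed

lemma nz: "MOST z. (gi a n z)^2 + a \<noteq> 0" by (rule nz_from_link[OF link])

lemma nz0: "MOST z. gi a n z \<noteq> 0"
proof -
  { assume Z: "MOST z. gi a n z = 0"
    have "MOST z. F n (Some z) = Some 0"
      using MOST_conjI[OF link[of n] Z] by (rule MOST_mono) simp
    then have "infinite {z. F n (Some z) = Some 0}" by (rule MOST_infinite)
    moreover have "finite (Some -` {x. F n x = Some 0})"
      by (rule finite_vimageI[OF fib_F[OF a0]]) simp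
    ultimately have False by (simp add: vimage_def)
  }
  then show ?thesis using RF_zero_or_nz[OF RF_g] by blast
qed

lemma phi_eq: assumes "x^2 + a \<noteq> 0" "y^2 + a \<noteq> 0" "phi a x = phi a y" shows "x^2 = y^2"
proof -
  from assms have e: "(x^2 - a) * (y^2 + a) = (y^2 - a) * (x^2 + a)" by (simp add: phi_def field_simps)
  have "2 * a * (x^2 - y^2) = (x^2 - a) * (y^2 + a) - (y^2 - a) * (x^2 + a)" by (simp add: algebra_simps)
  also have "\<dots> = 0" using e by simp
  finally show ?thesis using a0 by simp
qed

lemma phi_negeq: assumes "x^2 + a \<noteq> 0" "y^2 + a \<noteq> 0" "phi a x = - phi a y" shows "(x*y)^2 = a^2"
proof -
  from assms have e: "(x^2 - a) * (y^2 + a) = - ((y^2 - a) * (x^2 + a))" by (simp add: phi_def field_simps)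
  have "2 * ((x*y)^2 - a^2) = (x^2 - a) * (y^2 + a) + (y^2 - a) * (x^2 + a)"
    by (simp add: algebra_simps power2_eq_square)
  also have "\<dots> = 0" using e by simp
  finally show ?thesis by simp
qed

lemma coef3: assumes "MOST z. c2*z^2 + c1*z + c0 = (0::complex)" shows "c2 = 0 \<and> c1 = 0 \<and> c0 = 0"
proof -
  have pe: "\<And>z. poly [:c0,c1,c2:] z = c2*z^2 + c1*z + c0" by (simp add: algebra_simps power2_eq_square)
  have eqs: "{z. poly [:c0,c1,c2:] z = 0} = {z. c2*z^2 + c1*z + c0 = 0}" by (simp only: pe)
  have "infinite {z. poly [:c0,c1,c2:] z = 0}" unfolding eqs by (rule MOST_infinite[OF assms])
  then have "[:c0,c1,c2:] = 0" using poly_roots_finite by blast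
  then show ?thesis by simp
qed

end



definition good :: "complex \<Rightarrow> nat \<Rightarrow> complex \<Rightarrow> bool" where
  "good a l z \<longleftrightarrow> (\<forall>i<l. (gi a i z)^2 + a \<noteq> 0)"

fun gD :: "complex \<Rightarrow> nat \<Rightarrow> complex \<Rightarrow> complex" where
  "gD a 0 z = 1"
| "gD a (Suc n) z = 4*a*gi a n z/((gi a n z)^2+a)^2 * gD a n z"

lemma good_Suc: "good a (Suc n) z \<longleftrightarrow> good a n z \<and> (gi a n z)^2 + a \<noteq> 0"
  by (auto simp: good_def less_Suc_eq)

lemma g_fun: "gi a (Suc n) = (\<lambda>z. phi a (gi a n z))" by (simp add: fun_eq_iff)
lemma g0_fun: "gi a 0 = (\<lambda>z. z)" by (simp add: fun_eq_iff)
lemma phi_fun: "phi a = (\<lambda>w. (w^2 - a)/(w^2 + a))" by (simp add: fun_eq_iff phi_def)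

lemma phi_deriv: assumes w: "w^2 + a \<noteq> 0" shows "(phi a has_field_derivative 4*a*w/(w^2+a)^2) (at w)"
proof -
  have d1: "((\<lambda>w. w^2 - a) has_field_derivative 2*w) (at w)"
    by (auto intro!: derivative_eq_intros)
  have d2: "((\<lambda>w. w^2 + a) has_field_derivative 2*w) (at w)"
    by (auto intro!: derivative_eq_intros)
  have "((\<lambda>w. (w^2 - a)/(w^2+a)) has_field_derivative ((2*w)*(w^2+a) - (w^2-a)*(2*w))/((w^2+a)*(w^2+a))) (at w)"
    by (rule DERIV_divide[OF d1 d2 w])
  moreover have "(2*w)*(w^2+a) - (w^2-a)*(2*w) = 4*a*w" by (simp add: algebra_simps)
  ultimately show ?thesis by (simp add: phi_fun power2_eq_square)
qed

lemma g_deriv: "good a n z \<Longrightarrow> (gi a n has_field_derivative gD a n z) (at z)"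
proof (induction n)
  case 0 then show ?case by (simp add: g0_fun)
next
  case (Suc n)
  then have g: "good a n z" and w: "(gi a n z)^2 + a \<noteq> 0" by (auto simp: good_Suc)
  show ?case unfolding g_fun gD.simps
    by (rule DERIV_chain2[OF phi_deriv[OF w] Suc.IH[OF g]])
qed

lemma gD_nz: assumes "a \<noteq> 0" shows "good a n z \<Longrightarrow> (\<forall>i<n. gi a i z \<noteq> 0) \<Longrightarrow> gD a n z \<noteq> 0"
proof (induction n)
  case 0 then show ?case by simp
next
  case (Suc n)
  then have "good a n z" "(gi a n z)^2 + a \<noteq> 0" "\<forall>i<n. gi a i z \<noteq> 0" "gi a n z \<noteq> 0"
    by (auto simp: good_Suc)
  with Suc.IH assms show ?case by simp
qed

lemma g_cont: "continuous_on {z. good a n z} (gi a n)"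
  by (rule continuous_at_imp_continuous_on) (auto intro: DERIV_isCont g_deriv)

lemma good_open: "open {z. good a n z}"
proof (induction n)
  case 0 then show ?case by (simp add: good_def)
next
  case (Suc n)
  have c: "continuous_on {z. good a n z} (\<lambda>z. (gi a n z)^2 + a)"
    by (intro continuous_intros g_cont)
  have "{z. good a (Suc n) z} = {z. good a n z} \<inter> (\<lambda>z. (gi a n z)^2 + a) -` (- {0})"
    by (auto simp: good_Suc)
  also have "open \<dots>" by (rule continuous_open_preimage[OF c Suc.IH]) (rule open_Compl, simp)
  finally show ?case .
qed

lemma g_sq_neg: "(gi a i (-z))^2 = (gi a i z)^2"
proof (cases i)
  case 0 then show ?thesis by simp
next
  case (Suc j) then show ?thesis by (simp only: g_neg)
qed
lemma g_nz_neg: "gi a i (-z) = 0 \<longleftrightarrow> gi a i z = 0"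
proof (cases i)
  case 0 then show ?thesis by simp
next
  case (Suc j) then show ?thesis by (simp only: g_neg)
qed
lemma good_neg: "good a l (-z) \<longleftrightarrow> good a l z" by (simp add: good_def g_sq_neg)

lemma ext_pt:
  fixes f g :: "complex \<Rightarrow> complex"
  assumes "isCont f z0" "isCont g z0" "0 < r" "finite X" "\<forall>z\<in>ball z0 r - X. f z = g z"
  shows "f z0 = g z0"
proof -
  have e1: "eventually (\<lambda>z. z \<in> ball z0 r \<and> z \<in> UNIV) (at z0 within UNIV)"
    using assms(3) by (rule eventually_at_ball)
  have e2: "eventually (\<lambda>z. z \<notin> X) (at z0)"
    using assms(4) islimpt_finite islimpt_iff_eventually by blast
  have ev: "eventually (\<lambda>z. f z = g z) (at z0)"
    using e1 e2 by eventually_elim (use assms(5) in auto)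
  have "(f \<longlongrightarrow> f z0) (at z0)" using assms(1) by (simp add: isCont_def)
  then have "(g \<longlongrightarrow> f z0) (at z0)" using tendsto_cong[OF ev] by blast
  moreover have "(g \<longlongrightarrow> g z0) (at z0)" using assms(2) by (simp add: isCont_def)
  ultimately show ?thesis by (rule tendsto_unique[OF at_neq_bot])
qed

lemma poly_isCont: "isCont (poly p) (z::complex)"
  by (rule DERIV_isCont[OF poly_DERIV])

lemma L:
  fixes P Q :: "complex poly" and S :: "complex \<Rightarrow> complex"
  assumes "Q \<noteq> 0" "0 < r" "finite X" "continuous_on (ball z0 r) S" "S z0 = 0"
    "(S has_field_derivative S') (at z0)" "S' \<noteq> 0"
    "\<forall>z\<in>ball z0 r - X. (poly P z / poly Q z)^2 = S z"
  shows False
  using assms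
proof (induction "degree Q" arbitrary: P Q X rule: less_induct)
  case less
  have Sc: "\<And>z. z \<in> ball z0 r \<Longrightarrow> isCont S z"
    using less.prems(4) by (simp add: continuous_on_eq_continuous_at)
  show False
  proof (cases "poly Q z0 = 0")
    case False
    define U where "U = ball z0 r \<inter> - {z. poly Q z = 0}"
    have oU: "open U" unfolding U_def
      using poly_roots_finite[OF less.prems(1)] by (intro open_Int open_ball open_Compl finite_imp_closed)
    have z0U: "z0 \<in> U" using False less.prems(2) by (simp add: U_def)
    define R where "R = (\<lambda>z. poly P z / poly Q z)"
    have Rc: "isCont R z" if "z \<in> U" for z
      using that unfolding R_def U_def by (auto intro!: isCont_divide poly_isCont)
    have eq: "R z * R z = S z" if zU: "z \<in> U" for z
    proof -
      obtain \<rho> where \<rho>: "\<rho> > 0" "ball z \<rho> \<subseteq> U" using oU zU open_contains_ball by blast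
      have zb: "z \<in> ball z0 r" using zU by (simp add: U_def)
      show ?thesis
      proof (rule ext_pt[where f="\<lambda>z. R z * R z" and g=S and r=\<rho> and X=X])
        show "isCont (\<lambda>z. R z * R z) z" using Rc[OF zU] by (intro isCont_mult)
        show "isCont S z" using Sc[OF zb] .
        show "\<forall>w\<in>ball z \<rho> - X. R w * R w = S w"
          using less.prems(8) \<rho>(2) unfolding R_def U_def by (auto simp: power2_eq_square)
      qed (use \<rho> less.prems(3) in auto)
    qed
    obtain R' where dR: "(R has_field_derivative R') (at z0)"
      unfolding R_def using DERIV_divide[OF poly_DERIV poly_DERIV False] by blast
    have "((\<lambda>z. R z * R z) has_field_derivative R' * R z0 + R' * R z0) (at z0)"
      by (rule DERIV_mult[OF dR dR])
    then have "(S has_field_derivative R' * R z0 + R' * R z0) (at z0)"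
      by (rule has_field_derivative_transform_within_open[OF _ oU z0U]) (use eq in auto)
    then have "S' = R' * R z0 + R' * R z0" by (rule DERIV_unique[OF less.prems(6)])
    moreover have "R z0 = 0" using eq[OF z0U] less.prems(5) by simp
    ultimately show False using less.prems(7) by simp
  next
    case True
    obtain Q1 where Q1: "Q = [:-z0,1:] * Q1" using True by (auto simp: poly_eq_0_iff_dvd dvd_def)
    have Q1nz: "Q1 \<noteq> 0" using less.prems(1) Q1 by auto
    have "degree Q = degree [:-z0,1:] + degree Q1" unfolding Q1 using Q1nz by (rule degree_mult_eq[rotated]) simp
    then have dQ: "degree Q1 < degree Q" by simp
    show False
    proof (cases "poly P z0 = 0")
      case True
      obtain P1 where P1: "P = [:-z0,1:] * P1" using True by (auto simp: poly_eq_0_iff_dvd dvd_def)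
      have "\<forall>z\<in>ball z0 r - insert z0 X. (poly P1 z / poly Q1 z)^2 = S z"
      proof
        fix z assume z: "z \<in> ball z0 r - insert z0 X"
        then have nz: "z - z0 \<noteq> 0" by auto
        have "poly P z / poly Q z = ((z - z0) * poly P1 z) / ((z - z0) * poly Q1 z)"
          by (simp add: P1 Q1 algebra_simps)
        also have "\<dots> = poly P1 z / poly Q1 z" using nz by (rule mult_divide_mult_cancel_left)
        finally have e1: "poly P z / poly Q z = poly P1 z / poly Q1 z" .
        have e2: "(poly P z / poly Q z)^2 = S z" using less.prems(8) z by blast
        show "(poly P1 z / poly Q1 z)^2 = S z" by (metis e1 e2)
      qed
      then show False
        using less.hyps[OF dQ Q1nz less.prems(2) finite_insert[THEN iffD2, OF less.prems(3)] less.prems(4-7)]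
        by blast
    next
      case False
      have fin: "finite (X \<union> {z. poly Q z = 0})" using less.prems(3) poly_roots_finite[OF less.prems(1)] by simp
      have "(poly P z0)^2 = S z0 * (poly Q z0)^2"
      proof (rule ext_pt[where f="\<lambda>z. (poly P z)^2" and g="\<lambda>z. S z * (poly Q z)^2", OF _ _ less.prems(2) fin])
        show "isCont (\<lambda>z. (poly P z)^2) z0" by (intro isCont_power poly_isCont)
        show "isCont (\<lambda>z. S z * (poly Q z)^2) z0"
          using Sc less.prems(2) by (intro isCont_mult isCont_power poly_isCont) auto
        show "\<forall>z\<in>ball z0 r - (X \<union> {z. poly Q z = 0}). (poly P z)^2 = S z * (poly Q z)^2"
          using less.prems(8) by (auto simp: power_divide divide_eq_eq)
      qed
      then show False using False True by simp
    qed
  qed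
qed

context fa begin

lemma phi_sq1: "w^2 = 1 \<Longrightarrow> phi a w = phi a 1" by (simp add: phi_def)

lemma preimage:
  assumes t: "t \<noteq> 1" "t \<noteq> -1" "t \<noteq> phi a 1"
  shows "\<exists>w. phi a w = t \<and> w^2 + a \<noteq> 0 \<and> w \<noteq> 0 \<and> w \<noteq> 1 \<and> w \<noteq> -1 \<and> w \<noteq> phi a 1"
proof -
  define r where "r = csqrt (a*(1+t)/(1-t))"
  have t1: "1 - t \<noteq> 0" using t by auto
  have t2: "1 + t \<noteq> 0" using t by (auto simp: add_eq_0_iff)
  have r2: "r^2 = a*(1+t)/(1-t)" by (simp add: r_def)
  have ra: "r^2 + a = 2*a/(1-t)" using t1 by (simp add: r2 field_simps)
  have rm: "r^2 - a = 2*a*t/(1-t)" using t1 by (simp add: r2 field_simps)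
  have ra0: "r^2 + a \<noteq> 0" using ra a0 t1 by simp
  have pr: "phi a r = t" unfolding phi_def rm ra using a0 t1 by (simp add: field_simps)
  have r0: "r \<noteq> 0" proof assume "r = 0" then have "a*(1+t)/(1-t) = 0" using r2 by simp
    with a0 t1 t2 show False by simp qed
  have r1: "r^2 \<noteq> 1" proof assume "r^2 = 1" then have "phi a r = phi a 1" by (rule phi_sq1)
    with pr t show False by simp qed
  have r1': "r \<noteq> 1" "r \<noteq> -1" using r1 by auto
  show ?thesis
  proof (cases "r = phi a 1")
    case False then show ?thesis using pr ra0 r0 r1' by blast
  next
    case True
    have "phi a (-r) = t" using pr by (simp add: phi_neg)
    moreover have "(-r)^2 + a \<noteq> 0" using ra0 by simp
    moreover have "-r \<noteq> phi a 1" using True r0 by auto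
    moreover have "-r \<noteq> 1" "-r \<noteq> -1" using r1' by (metis minus_minus)+
    moreover have "-r \<noteq> 0" using r0 by simp
    ultimately show ?thesis by blast
  qed
qed

lemma chain:
  "t \<noteq> 0 \<Longrightarrow> t \<noteq> 1 \<Longrightarrow> t \<noteq> -1 \<Longrightarrow> t \<noteq> phi a 1 \<Longrightarrow>
   \<exists>z. gi a l z = t \<and> good a l z \<and> (\<forall>i<l. gi a i z \<noteq> 0)"
proof (induction l arbitrary: t)
  case 0 then show ?case by (intro exI[of _ t]) (simp add: good_def)
next
  case (Suc l)
  obtain w where w: "phi a w = t" "w^2 + a \<noteq> 0" "w \<noteq> 0" "w \<noteq> 1" "w \<noteq> -1" "w \<noteq> phi a 1"
    using preimage Suc.prems by blast
  obtain z where z: "gi a l z = w" "good a l z" "\<forall>i<l. gi a i z \<noteq> 0" using Suc.IH w by blast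
  have "gi a (Suc l) z = t" using z w by simp
  moreover have "good a (Suc l) z" using z w by (simp add: good_Suc)
  moreover have "\<forall>i<Suc l. gi a i z \<noteq> 0" using z w by (auto simp: less_Suc_eq)
  ultimately show ?case by blast
qed

lemma chain2:
  assumes t: "t \<noteq> 0" "t \<noteq> 1" "t \<noteq> -1" "t \<noteq> phi a 1" and d: "\<alpha>*\<delta> - \<beta>*\<gamma> \<noteq> 0"
  shows "\<exists>z. gi a (Suc k) z = t \<and> good a (Suc k) z \<and> (\<forall>i<Suc k. gi a i z \<noteq> 0) \<and> \<gamma>*z+\<delta> \<noteq> 0"
proof -
  obtain z where z: "gi a (Suc k) z = t" "good a (Suc k) z" "\<forall>i<Suc k. gi a i z \<noteq> 0"
    using chain[OF t] by blast
  have z0: "z \<noteq> 0" using z(3) by (metis gi.simps(1) zero_less_Suc)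
  show ?thesis
  proof (cases "\<gamma>*z+\<delta> = 0")
    case False with z show ?thesis by blast
  next
    case True
    have "\<gamma>*(-z)+\<delta> \<noteq> 0"
    proof
      assume "\<gamma>*(-z)+\<delta> = 0"
      with True have "\<delta> = 0" "\<gamma> * z = 0" by (auto simp: algebra_simps)
      with z0 have "\<delta> = 0" "\<gamma> = 0" by auto
      with d show False by simp
    qed
    moreover have "gi a (Suc k) (-z) = t" using z(1) by (simp only: g_neg)
    moreover have "good a (Suc k) (-z)" using z(2) by (simp add: good_neg)
    moreover have "\<forall>i<Suc k. gi a i (-z) \<noteq> 0" using z(3) by (simp add: g_nz_neg)
    ultimately show ?thesis by blast
  qed
qed

end



context fa begin

lemma R:
  assumes d: "\<alpha>*\<delta> - \<beta>*\<gamma> \<noteq> 0" and c: "c = a \<or> c = -a"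
    and H0: "MOST z. gi a (Suc k) (mob \<alpha> \<beta> \<gamma> \<delta> z) = c / gi a (Suc k) z"
  shows False
proof -
  define v where "v = phi a 1"
  have c0: "c \<noteq> 0" "c \<noteq> 1" "c \<noteq> -1" using c a0 a1 am1 by (auto simp: minus_equation_iff)
  define t0 where "t0 = (if -c \<noteq> v then -c else c)"
  have t0: "t0 \<noteq> 0" "t0 \<noteq> 1" "t0 \<noteq> -1" "t0 \<noteq> phi a 1"
    using c0 by (auto simp: t0_def v_def[symmetric] minus_equation_iff)
  obtain z0 where z0: "gi a (Suc k) z0 = t0" "good a (Suc k) z0" "\<forall>i<Suc k. gi a i z0 \<noteq> 0" "\<gamma>*z0+\<delta> \<noteq> 0"
    using chain2[OF t0 d] by blast
  define G where "G = {z. good a (Suc k) z}"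
  have oG: "open G" unfolding G_def by (rule good_open)
  have gc: "continuous_on G (gi a (Suc k))" unfolding G_def by (rule g_cont)
  define D where "D = gD a (Suc k) z0"
  have dg: "(gi a (Suc k) has_field_derivative D) (at z0)" unfolding D_def by (rule g_deriv[OF z0(2)])
  have D0: "D \<noteq> 0" unfolding D_def by (rule gD_nz[OF a0 z0(2,3)])
  define H where "H = (\<lambda>z. c / gi a (Suc k) z)"
  define e where "e = c / t0"
  have He: "H z0 = e" by (simp only: H_def e_def z0(1))
  have e: "(e = -1 \<and> t0 = -c) \<or> (e = 1 \<and> t0 = c)" using c0 by (auto simp: e_def t0_def)
  define V where "V = G \<inter> gi a (Suc k) -` (- {0})"
  have oV: "open V" unfolding V_def by (rule continuous_open_preimage[OF gc oG]) (rule open_Compl, simp)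
  have Hc: "continuous_on V H" unfolding H_def V_def
    by (intro continuous_intros continuous_on_subset[OF gc]) auto
  define U where "U = V \<inter> H -` ball e (1/2)"
  have oU: "open U" unfolding U_def by (rule continuous_open_preimage[OF Hc oV]) simp
  have z0U: "z0 \<in> U" unfolding U_def V_def G_def using z0(1,2) t0(1) He by simp
  have HcU: "continuous_on U H" using Hc by (rule continuous_on_subset) (auto simp: U_def)
  obtain r where r: "r > 0" "ball z0 r \<subseteq> U" using oU z0U open_contains_ball by blast
  have Hnear: "cmod (H z - e) < 1/2" if "z \<in> U" for z
    using that by (auto simp: U_def dist_norm norm_minus_commute)
  have e1: "cmod e = 1" using e by auto
  have Hn0: "H z \<noteq> 0" if "z \<in> U" for z
    using Hnear[OF that] e1 by auto
  have Hne: "H z \<noteq> - e" if "z \<in> U" for z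
  proof
    assume "H z = - e"
    then have "cmod (H z - e) = 2" using e by auto
    with Hnear[OF that] show False by simp
  qed
  have dH: "(H has_field_derivative (0 * gi a (Suc k) z0 - c * D) / (gi a (Suc k) z0 * gi a (Suc k) z0)) (at z0)"
    unfolding H_def by (rule DERIV_divide[OF DERIV_const dg]) (unfold z0(1), rule t0(1))
  define H' where "H' = (0 * gi a (Suc k) z0 - c * D) / (gi a (Suc k) z0 * gi a (Suc k) z0)"
  have H'0: "H' \<noteq> 0" unfolding H'_def z0(1) using c0 D0 t0 by simp
  have dH': "(H has_field_derivative H') (at z0)" using dH by (simp add: H'_def)
  define A where "A = (\<lambda>z. gi a k (mob \<alpha> \<beta> \<gamma> \<delta> z))"
  have RA: "RF A" unfolding A_def by (rule RF_mob[OF RF_g d])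
  define X0 where "X0 = {z. \<not> gi a (Suc k) (mob \<alpha> \<beta> \<gamma> \<delta> z) = c / gi a (Suc k) z}"
  have fX0: "finite X0" using H0 by (simp add: X0_def MOST_iff_cofinite)
  have phA: "phi a (A z) = H z" if "z \<notin> X0" for z
    using that by (simp add: X0_def A_def H_def)
  have Aeq: "(A z)^2 * (1 - H z) = a * (1 + H z)" if "z \<in> U" "z \<notin> X0" for z
  proof -
    have nz: "(A z)^2 + a \<noteq> 0"
    proof
      assume "(A z)^2 + a = 0"
      then have "phi a (A z) = 0" by (simp add: phi_def)
      with phA[OF that(2)] Hn0[OF that(1)] show False by simp
    qed
    have "((A z)^2 - a) / ((A z)^2 + a) = H z" using phA[OF that(2)] by (simp add: phi_def)
    then have "(A z)^2 - a = H z * ((A z)^2 + a)" using nz by (simp add: field_simps)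
    then show ?thesis by (simp add: algebra_simps)
  qed
  from e show False
  proof
    assume ee: "e = -1 \<and> t0 = -c"
    define S where "S = (\<lambda>z. (a + a * H z) / (1 - H z))"
    have H1: "1 - H z \<noteq> 0" if "z \<in> U" for z using Hne[OF that] ee by auto
    have Sc: "continuous_on (ball z0 r) S"
      using r(2) HcU H1 unfolding S_def
      by (intro continuous_intros continuous_on_subset[OF HcU]) auto
    have S0: "S z0 = 0" using He ee by (simp add: S_def)
    have dS: "(S has_field_derivative ((0 + a * H') * (1 - H z0) - (a + a * H z0) * (0 - H')) / ((1 - H z0) * (1 - H z0))) (at z0)"
      unfolding S_def
      by (rule DERIV_divide[OF DERIV_add[OF DERIV_const DERIV_cmult[OF dH']] DERIV_diff[OF DERIV_const dH']])
        (use He ee in simp)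
    have S'0: "((0 + a * H') * (1 - H z0) - (a + a * H z0) * (0 - H')) / ((1 - H z0) * (1 - H z0)) \<noteq> 0"
      using He ee a0 H'0 by simp
    obtain P Q where PQ: "Q \<noteq> 0" "MOST z. A z = poly P z / poly Q z" using RA unfolding RF_def by blast
    define X1 where "X1 = {z. \<not> A z = poly P z / poly Q z}"
    have fX1: "finite X1" using PQ(2) by (simp add: X1_def MOST_iff_cofinite)
    have "\<forall>z\<in>ball z0 r - (X0 \<union> X1). (poly P z / poly Q z)^2 = S z"
    proof
      fix z assume z: "z \<in> ball z0 r - (X0 \<union> X1)"
      then have zU: "z \<in> U" and zX: "z \<notin> X0" "z \<notin> X1" using r(2) by auto
      have "A z = poly P z / poly Q z" using zX(2) by (simp add: X1_def)
      moreover have "(A z)^2 = S z"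
        using Aeq[OF zU zX(1)] H1[OF zU] by (simp add: S_def field_simps)
      ultimately show "(poly P z / poly Q z)^2 = S z" by simp
    qed
    then show False using L[OF PQ(1) r(1) finite_UnI[OF fX0 fX1] Sc S0 dS S'0] by blast
  next
    assume ee: "e = 1 \<and> t0 = c"
    define S where "S = (\<lambda>z. (1 - H z) / (a + a * H z))"
    have H1: "a + a * H z \<noteq> 0" if "z \<in> U" for z
    proof
      assume "a + a * H z = 0"
      then have "a * (1 + H z) = 0" by (simp add: algebra_simps)
      with a0 have "H z = -1" by (simp add: add_eq_0_iff)
      with Hne[OF that] ee show False by simp
    qed
    have Sc: "continuous_on (ball z0 r) S"
      using r(2) HcU H1 unfolding S_def
      by (intro continuous_intros continuous_on_subset[OF HcU]) auto
    have S0: "S z0 = 0" using He ee by (simp add: S_def)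
    have dS: "(S has_field_derivative ((0 - H') * (a + a * H z0) - (1 - H z0) * (0 + a * H')) / ((a + a * H z0) * (a + a * H z0))) (at z0)"
      unfolding S_def
      by (rule DERIV_divide[OF DERIV_diff[OF DERIV_const dH'] DERIV_add[OF DERIV_const DERIV_cmult[OF dH']]])
        (use He ee a0 in simp)
    have S'0: "((0 - H') * (a + a * H z0) - (1 - H z0) * (0 + a * H')) / ((a + a * H z0) * (a + a * H z0)) \<noteq> 0"
      using He ee a0 H'0 by simp
    have RA': "RF (\<lambda>z. 1 / A z)" by (rule RF_divide[OF RF_const RA])
    obtain P Q where PQ: "Q \<noteq> 0" "MOST z. 1 / A z = poly P z / poly Q z" using RA' unfolding RF_def by blast
    define X1 where "X1 = {z. \<not> 1 / A z = poly P z / poly Q z}"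
    have fX1: "finite X1" using PQ(2) by (simp add: X1_def MOST_iff_cofinite)
    have "\<forall>z\<in>ball z0 r - (X0 \<union> X1). (poly P z / poly Q z)^2 = S z"
    proof
      fix z assume z: "z \<in> ball z0 r - (X0 \<union> X1)"
      then have zU: "z \<in> U" and zX: "z \<notin> X0" "z \<notin> X1" using r(2) by auto
      have PQz: "1 / A z = poly P z / poly Q z" using zX(2) by (simp add: X1_def)
      have Ae: "(A z)^2 * (1 - H z) = a + a * H z" using Aeq[OF zU zX(1)] by (simp add: algebra_simps)
      have h1: "1 - H z \<noteq> 0" using Ae H1[OF zU] by auto
      have "S z = (1 - H z) / ((A z)^2 * (1 - H z))" by (simp only: S_def Ae[symmetric])
      then have Sz: "S z = 1 / (A z)^2" using h1 by simp
      show "(poly P z / poly Q z)^2 = S z" unfolding Sz PQz[symmetric] by (simp add: power_divide)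
    qed
    then show False using L[OF PQ(1) r(1) finite_UnI[OF fX0 fX1] Sc S0 dS S'0] by blast
  qed
qed

end



context fa begin

lemma deck_link:
  assumes d: "\<alpha>*\<delta> - \<beta>*\<gamma> \<noteq> 0" and e: "F n \<circ> moebius_app \<alpha> \<beta> \<gamma> \<delta> = F n"
  shows "MOST z. gi a n (mob \<alpha> \<beta> \<gamma> \<delta> z) = gi a n z"
proof -
  have m: "MOST z. moebius_app \<alpha> \<beta> \<gamma> \<delta> (Some z) = Some (mob \<alpha> \<beta> \<gamma> \<delta> z)"
    using MOST_denom[OF d] by (rule MOST_mono) (simp add: moebius_app_def mob_def)
  have l2: "MOST z. F n (Some (mob \<alpha> \<beta> \<gamma> \<delta> z)) = Some (gi a n (mob \<alpha> \<beta> \<gamma> \<delta> z))"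
    by (rule MOST_mob[OF d link])
  show ?thesis using MOST_conjI[OF MOST_conjI[OF m l2] link[of n]]
  proof (rule MOST_mono)
    fix z assume h: "(moebius_app \<alpha> \<beta> \<gamma> \<delta> (Some z) = Some (mob \<alpha> \<beta> \<gamma> \<delta> z) \<and>
       F n (Some (mob \<alpha> \<beta> \<gamma> \<delta> z)) = Some (gi a n (mob \<alpha> \<beta> \<gamma> \<delta> z))) \<and> F n (Some z) = Some (gi a n z)"
    have "F n (moebius_app \<alpha> \<beta> \<gamma> \<delta> (Some z)) = F n (Some z)" using e by (metis comp_apply)
    with h show "gi a n (mob \<alpha> \<beta> \<gamma> \<delta> z) = gi a n z" by simp
  qed
qed

lemma main_ind:
  assumes d: "\<alpha>*\<delta> - \<beta>*\<gamma> \<noteq> 0"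
  shows "((MOST z. gi a n (mob \<alpha> \<beta> \<gamma> \<delta> z) = gi a n z) \<longrightarrow>
           (MOST z. mob \<alpha> \<beta> \<gamma> \<delta> z = z) \<or> (MOST z. mob \<alpha> \<beta> \<gamma> \<delta> z = -z) \<or>
           (2 \<le> n \<and> ((MOST z. mob \<alpha> \<beta> \<gamma> \<delta> z = a/z) \<or> (MOST z. mob \<alpha> \<beta> \<gamma> \<delta> z = -a/z))))
       \<and> ((MOST z. gi a n (mob \<alpha> \<beta> \<gamma> \<delta> z) = - gi a n z) \<longrightarrow>
           (n = 0 \<and> (MOST z. mob \<alpha> \<beta> \<gamma> \<delta> z = -z)) \<or>
           (n = 1 \<and> ((MOST z. mob \<alpha> \<beta> \<gamma> \<delta> z = a/z) \<or> (MOST z. mob \<alpha> \<beta> \<gamma> \<delta> z = -a/z))))"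
proof (induction n)
  case 0 then show ?case by simp
next
  case (Suc n)
  let ?m = "mob \<alpha> \<beta> \<gamma> \<delta>"
  have nzx: "MOST z. (gi a n (?m z))^2 + a \<noteq> 0" by (rule MOST_mob[OF d nz])
  have RX: "RF (\<lambda>z. gi a n (?m z))" by (rule RF_mob[OF RF_g d])
  show ?case
  proof (intro conjI impI)
    assume h: "MOST z. gi a (Suc n) (?m z) = gi a (Suc n) z"
    have "MOST z. (gi a n (?m z))^2 = (gi a n z)^2"
      using MOST_conjI[OF h MOST_conjI[OF nzx nz]] by (rule MOST_mono) (auto intro: phi_eq)
    from RF_sq[OF RX RF_g this]
    show "(MOST z. ?m z = z) \<or> (MOST z. ?m z = -z) \<or>
           (2 \<le> Suc n \<and> ((MOST z. ?m z = a/z) \<or> (MOST z. ?m z = -a/z)))"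
    proof
      assume "MOST z. gi a n (?m z) = gi a n z"
      then show ?thesis using Suc.IH by auto
    next
      assume "MOST z. gi a n (?m z) = - gi a n z"
      then show ?thesis using Suc.IH by auto
    qed
  next
    assume h: "MOST z. gi a (Suc n) (?m z) = - gi a (Suc n) z"
    have "MOST z. (gi a n (?m z) * gi a n z)^2 = a^2"
      using MOST_conjI[OF h MOST_conjI[OF nzx nz]] by (rule MOST_mono) (auto intro: phi_negeq)
    from RF_sq[OF RF_mult[OF RX RF_g] RF_const this]
    obtain c where c: "c = a \<or> c = -a" and hc: "MOST z. gi a n (?m z) * gi a n z = c" by auto
    have hc2: "MOST z. gi a n (?m z) = c / gi a n z"
      using MOST_conjI[OF hc nz0] by (rule MOST_mono) (auto simp: field_simps)
    show "(Suc n = 0 \<and> (MOST z. ?m z = -z)) \<or>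
           (Suc n = 1 \<and> ((MOST z. ?m z = a/z) \<or> (MOST z. ?m z = -a/z)))"
    proof (cases n)
      case 0
      then have "MOST z. ?m z = c / z" using hc2 by simp
      then show ?thesis using c 0 by auto
    next
      case (Suc k)
      with R[OF d c] hc2 show ?thesis by blast
    qed
  qed
qed

lemma mob_eq_poly:
  assumes d: "\<alpha>*\<delta> - \<beta>*\<gamma> \<noteq> 0" and h: "MOST z. mob \<alpha> \<beta> \<gamma> \<delta> z = w z"
    and k: "\<And>z. \<gamma>*z+\<delta> \<noteq> 0 \<Longrightarrow> z \<noteq> 0 \<Longrightarrow> mob \<alpha> \<beta> \<gamma> \<delta> z = w z \<Longrightarrow> c2*z^2 + c1*z + c0 = 0"
  shows "c2 = 0 \<and> c1 = 0 \<and> c0 = 0"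
proof (rule coef3)
  have nz: "MOST z::complex. z \<noteq> 0" by (rule MOST_neq)
  show "MOST z. c2*z^2 + c1*z + c0 = 0"
    using MOST_conjI[OF h MOST_conjI[OF MOST_denom[OF d] nz]] by (rule MOST_mono) (use k in blast)
qed

lemma iota_eq: "moebius_app (-1) 0 0 1 = map_option uminus"
  by (rule ext, case_tac x) (simp_all add: moebius_app_def)

lemma deck_class:
  assumes n: "2 \<le> n" and t: "\<tau> \<in> Deck (F n)"
  shows "\<tau> \<in> {id, moebius_app (-1) 0 0 1, moebius_app 0 a 1 0, moebius_app 0 (-a) 1 0}"
proof -
  from t obtain \<alpha> \<beta> \<gamma> \<delta> where d: "\<alpha>*\<delta> - \<beta>*\<gamma> \<noteq> 0" and te: "\<tau> = moebius_app \<alpha> \<beta> \<gamma> \<delta>"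
    and e: "F n \<circ> \<tau> = F n"
    by (auto simp: Deck_def is_moebius_def)
  have "MOST z. gi a n (mob \<alpha> \<beta> \<gamma> \<delta> z) = gi a n z"
    by (rule deck_link[OF d]) (use e te in simp)
  then have cs: "(MOST z. mob \<alpha> \<beta> \<gamma> \<delta> z = z) \<or> (MOST z. mob \<alpha> \<beta> \<gamma> \<delta> z = -z) \<or>
     (MOST z. mob \<alpha> \<beta> \<gamma> \<delta> z = a/z) \<or> (MOST z. mob \<alpha> \<beta> \<gamma> \<delta> z = -a/z)"
    using main_ind[OF d, of n] by blast
  then show ?thesis
  proof (elim disjE)
    assume h: "MOST z. mob \<alpha> \<beta> \<gamma> \<delta> z = z"
    have "\<gamma> = 0 \<and> \<delta> - \<alpha> = 0 \<and> - \<beta> = 0"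
    proof (rule mob_eq_poly[OF d h])
      fix z assume z: "\<gamma>*z+\<delta> \<noteq> 0" "z \<noteq> 0" "mob \<alpha> \<beta> \<gamma> \<delta> z = z"
      then have eq: "\<alpha>*z+\<beta> = z*(\<gamma>*z+\<delta>)" by (simp add: mob_def divide_eq_eq)
      have "\<gamma>*z^2 + (\<delta> - \<alpha>)*z + - \<beta> = z*(\<gamma>*z+\<delta>) - (\<alpha>*z+\<beta>)" by (simp add: algebra_simps power2_eq_square)
      also have "\<dots> = 0" by (simp only: eq) simp
      finally show "\<gamma>*z^2 + (\<delta> - \<alpha>)*z + - \<beta> = 0" .
    qed
    then have "\<gamma> = 0" "\<delta> = \<alpha>" "\<beta> = 0" by auto
    with d have "\<tau> = id" unfolding te by (intro ext, case_tac x) (auto simp: moebius_app_def)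
    then show ?thesis by simp
  next
    assume h: "MOST z. mob \<alpha> \<beta> \<gamma> \<delta> z = -z"
    have "\<gamma> = 0 \<and> \<delta> + \<alpha> = 0 \<and> \<beta> = 0"
    proof (rule mob_eq_poly[OF d h])
      fix z assume z: "\<gamma>*z+\<delta> \<noteq> 0" "z \<noteq> 0" "mob \<alpha> \<beta> \<gamma> \<delta> z = -z"
      then have eq: "\<alpha>*z+\<beta> = -z*(\<gamma>*z+\<delta>)" by (simp add: mob_def divide_eq_eq)
      have "\<gamma>*z^2 + (\<delta> + \<alpha>)*z + \<beta> = z*(\<gamma>*z+\<delta>) + (\<alpha>*z+\<beta>)" by (simp add: algebra_simps power2_eq_square)
      also have "\<dots> = 0" by (simp only: eq) simp
      finally show "\<gamma>*z^2 + (\<delta> + \<alpha>)*z + \<beta> = 0" .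
    qed
    then have "\<gamma> = 0" "\<delta> = -\<alpha>" "\<beta> = 0" by (auto simp: add_eq_0_iff)
    with d have "\<tau> = moebius_app (-1) 0 0 1" unfolding te by (intro ext, case_tac x) (auto simp: moebius_app_def)
    then show ?thesis by simp
  next
    assume h: "MOST z. mob \<alpha> \<beta> \<gamma> \<delta> z = a/z"
    have "\<alpha> = 0 \<and> \<beta> - a*\<gamma> = 0 \<and> - (a*\<delta>) = 0"
    proof (rule mob_eq_poly[OF d h])
      fix z assume z: "\<gamma>*z+\<delta> \<noteq> 0" "z \<noteq> 0" "mob \<alpha> \<beta> \<gamma> \<delta> z = a/z"
      then have eq: "(\<alpha>*z+\<beta>)*z = a*(\<gamma>*z+\<delta>)" by (simp add: mob_def field_simps)
      have "\<alpha>*z^2 + (\<beta> - a*\<gamma>)*z + - (a*\<delta>) = (\<alpha>*z+\<beta>)*z - a*(\<gamma>*z+\<delta>)" by (simp add: algebra_simps power2_eq_square)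
      also have "\<dots> = 0" by (simp only: eq) simp
      finally show "\<alpha>*z^2 + (\<beta> - a*\<gamma>)*z + - (a*\<delta>) = 0" .
    qed
    then have "\<alpha> = 0" "\<beta> = a*\<gamma>" "\<delta> = 0" using a0 by auto
    with d have "\<tau> = moebius_app 0 a 1 0" unfolding te by (intro ext, case_tac x) (auto simp: moebius_app_def)
    then show ?thesis by simp
  next
    assume h: "MOST z. mob \<alpha> \<beta> \<gamma> \<delta> z = -a/z"
    have "\<alpha> = 0 \<and> \<beta> + a*\<gamma> = 0 \<and> a*\<delta> = 0"
    proof (rule mob_eq_poly[OF d h])
      fix z assume z: "\<gamma>*z+\<delta> \<noteq> 0" "z \<noteq> 0" "mob \<alpha> \<beta> \<gamma> \<delta> z = -a/z"
      then have eq: "(\<alpha>*z+\<beta>)*z = -a*(\<gamma>*z+\<delta>)" by (simp add: mob_def field_simps)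
      have "\<alpha>*z^2 + (\<beta> + a*\<gamma>)*z + a*\<delta> = (\<alpha>*z+\<beta>)*z + a*(\<gamma>*z+\<delta>)" by (simp add: algebra_simps power2_eq_square)
      also have "\<dots> = 0" by (simp only: eq) simp
      finally show "\<alpha>*z^2 + (\<beta> + a*\<gamma>)*z + a*\<delta> = 0" .
    qed
    then have "\<alpha> = 0" "\<beta> = -(a*\<gamma>)" "\<delta> = 0" using a0 by (auto simp: add_eq_0_iff)
    with d have "\<tau> = moebius_app 0 (-a) 1 0" unfolding te by (intro ext, case_tac x) (auto simp: moebius_app_def)
    then show ?thesis by simp
  qed
qed

end



context fa begin

abbreviation "ii \<equiv> moebius_app (-1) 0 0 1"
abbreviation "sp \<equiv> moebius_app 0 a 1 0"
abbreviation "sm \<equiv> moebius_app 0 (-a) 1 0"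

lemma ii_app: "ii (Some z) = Some (-z)" "ii None = None" by (simp_all add: moebius_app_def)
lemma sp_app: "z \<noteq> 0 \<Longrightarrow> sp (Some z) = Some (a/z)" "sp (Some 0) = None" "sp None = Some 0"
  by (simp_all add: moebius_app_def)
lemma sm_app: "z \<noteq> 0 \<Longrightarrow> sm (Some z) = Some (-a/z)" "sm (Some 0) = None" "sm None = Some 0"
  by (simp_all add: moebius_app_def)

lemma T_ii_ii: "ii \<circ> ii = id"
  by (rule ext, case_tac x) (simp_all add: ii_app)
lemma T_sp_sp: "sp \<circ> sp = id"
proof (rule ext)
  fix x show "(sp \<circ> sp) x = id x"
  proof (cases x)
    case None then show ?thesis by (simp add: sp_app)
  next
    case (Some z) then show ?thesis using a0 by (cases "z = 0") (simp_all add: sp_app)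
  qed
qed
lemma T_sm_sm: "sm \<circ> sm = id"
proof (rule ext)
  fix x show "(sm \<circ> sm) x = id x"
  proof (cases x)
    case None then show ?thesis by (simp add: sm_app)
  next
    case (Some z) then show ?thesis using a0 by (cases "z = 0") (simp_all add: sm_app)
  qed
qed
lemma T_ii_sp: "ii \<circ> sp = sm"
proof (rule ext)
  fix x show "(ii \<circ> sp) x = sm x"
  proof (cases x)
    case None then show ?thesis by (simp add: sp_app sm_app ii_app)
  next
    case (Some z) then show ?thesis using a0 by (cases "z = 0") (simp_all add: sp_app sm_app ii_app)
  qed
qed
lemma T_sp_ii: "sp \<circ> ii = sm"
proof (rule ext)
  fix x show "(sp \<circ> ii) x = sm x"
  proof (cases x)
    case None then show ?thesis by (simp add: sp_app sm_app ii_app)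
  next
    case (Some z) then show ?thesis using a0 by (cases "z = 0") (simp_all add: sp_app sm_app ii_app)
  qed
qed
lemma T_ii_sm: "ii \<circ> sm = sp"
proof (rule ext)
  fix x show "(ii \<circ> sm) x = sp x"
  proof (cases x)
    case None then show ?thesis by (simp add: sp_app sm_app ii_app)
  next
    case (Some z) then show ?thesis using a0 by (cases "z = 0") (simp_all add: sp_app sm_app ii_app)
  qed
qed
lemma T_sm_ii: "sm \<circ> ii = sp"
proof (rule ext)
  fix x show "(sm \<circ> ii) x = sp x"
  proof (cases x)
    case None then show ?thesis by (simp add: sp_app sm_app ii_app)
  next
    case (Some z) then show ?thesis using a0 by (cases "z = 0") (simp_all add: sp_app sm_app ii_app)
  qed
qed
lemma T_sp_sm: "sp \<circ> sm = ii"
proof (rule ext)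
  fix x show "(sp \<circ> sm) x = ii x"
  proof (cases x)
    case None then show ?thesis by (simp add: sp_app sm_app ii_app)
  next
    case (Some z) then show ?thesis using a0 by (cases "z = 0") (simp_all add: sp_app sm_app ii_app)
  qed
qed
lemma T_sm_sp: "sm \<circ> sp = ii"
proof (rule ext)
  fix x show "(sm \<circ> sp) x = ii x"
  proof (cases x)
    case None then show ?thesis by (simp add: sp_app sm_app ii_app)
  next
    case (Some z) then show ?thesis using a0 by (cases "z = 0") (simp_all add: sp_app sm_app ii_app)
  qed
qed

lemmas T = T_ii_ii T_sp_sp T_sm_sm T_ii_sp T_sp_ii T_ii_sm T_sm_ii T_sp_sm T_sm_sp

lemma vals: "ii (Some 1) = Some (-1)" "sp (Some 1) = Some a" "sm (Some 1) = Some (-a)"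
  by (simp_all add: ii_app sp_app sm_app)

lemma dist: "ii \<noteq> id" "sp \<noteq> id" "sm \<noteq> id" "sp \<noteq> ii" "sm \<noteq> ii" "sm \<noteq> sp"
proof -
  have 1: "(-1::complex) \<noteq> 1" by simp
  have 2: "-a \<noteq> a" using a0 by simp
  have 3: "-a \<noteq> -1" using a1 by simp
  have 4: "a \<noteq> -1" using am1 .
  have 5: "-a \<noteq> 1" using am1 by (auto simp: minus_equation_iff)
  show "ii \<noteq> id" proof assume "ii = id" then have "ii (Some 1) = Some 1" by simp with vals 1 show False by simp qed
  show "sp \<noteq> id" proof assume "sp = id" then have "sp (Some 1) = Some 1" by simp with vals a1 show False by simp qed
  show "sm \<noteq> id" proof assume "sm = id" then have "sm (Some 1) = Some 1" by simp with vals 5 show False by simp qed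
  show "sp \<noteq> ii" proof assume "sp = ii" then have "sp (Some 1) = ii (Some 1)" by simp with vals 4 show False by simp qed
  show "sm \<noteq> ii" proof assume "sm = ii" then have "sm (Some 1) = ii (Some 1)" by simp with vals 3 show False by simp qed
  show "sm \<noteq> sp" proof assume "sm = sp" then have "sm (Some 1) = sp (Some 1)" by simp with vals 2 show False by simp qed
qed

lemmas dists = dist dist[symmetric]

lemma f_ii: "f_map a (ii x) = f_map a x"
  by (cases x) (simp_all add: ii_app f_map_def)

lemma f_sp: "f_map a (sp x) = ii (f_map a x)"
proof (cases x)
  case None then show ?thesis using a0 by (simp add: sp_app ii_app f_map_def)
next
  case (Some z)
  show ?thesis
  proof (cases "z = 0")
    case True then show ?thesis using Some a0 by (simp add: sp_app ii_app f_map_def)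
  next
    case False
    have k1: "(a/z)^2 + a = a*(z^2+a)/z^2" using False by (simp add: field_simps power2_eq_square)
    have k2: "(a/z)^2 - a = -a*(z^2-a)/z^2" using False by (simp add: field_simps power2_eq_square)
    show ?thesis
    proof (cases "z^2 + a = 0")
      case True
      then have "(a/z)^2 + a = 0" using k1 by simp
      then show ?thesis using Some False True by (simp add: sp_app ii_app f_map_def)
    next
      case nz: False
      then have nz2: "(a/z)^2 + a \<noteq> 0" using k1 a0 False by simp
      have gen: "\<And>u. u \<noteq> 0 \<Longrightarrow> u + a \<noteq> 0 \<Longrightarrow> (-a*(u-a)/u)/(a*(u+a)/u) = -((u-a)/(u+a))"
        using a0 by (simp add: divide_simps)
      have "((a/z)^2 - a)/((a/z)^2 + a) = -((z^2 - a)/(z^2 + a))"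
        unfolding k1 k2 using False nz by (intro gen) auto
      then show ?thesis using Some False nz nz2 by (simp add: sp_app ii_app f_map_def)
    qed
  qed
qed

lemma f_sm: "f_map a (sm x) = ii (f_map a x)"
proof -
  have "sm x = ii (sp x)" using T_ii_sp by (metis comp_apply)
  then show ?thesis by (simp add: f_ii f_sp)
qed

lemma fii: "f_map a \<circ> ii = f_map a" by (simp add: fun_eq_iff f_ii)
lemma fsp: "f_map a \<circ> sp = ii \<circ> f_map a" by (simp add: fun_eq_iff f_sp)

lemma F_ii: "F (Suc m) \<circ> ii = F (Suc m)"
  by (simp only: funpow_Suc_right comp_assoc fii)

lemma F_sp: "F (Suc (Suc m)) \<circ> sp = F (Suc (Suc m))"
proof -
  have "F (Suc (Suc m)) \<circ> sp = F (Suc m) \<circ> (f_map a \<circ> sp)"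
    by (simp only: funpow_Suc_right[where n="Suc m"] comp_assoc)
  also have "\<dots> = F (Suc m) \<circ> (ii \<circ> f_map a)" by (simp only: fsp)
  also have "\<dots> = (F (Suc m) \<circ> ii) \<circ> f_map a" by (simp only: comp_assoc)
  also have "\<dots> = F (Suc m) \<circ> f_map a" by (simp only: F_ii)
  also have "\<dots> = F (Suc (Suc m))" by (simp only: funpow_Suc_right[where n="Suc m"])
  finally show ?thesis .
qed

lemma F_sm: "F (Suc (Suc m)) \<circ> sm = F (Suc (Suc m))"
proof -
  have "F (Suc (Suc m)) \<circ> sm = (F (Suc (Suc m)) \<circ> ii) \<circ> sp" by (simp only: T_ii_sp[symmetric] comp_assoc)
  also have "\<dots> = F (Suc (Suc m))" by (simp only: F_ii F_sp)
  finally show ?thesis .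
qed

lemma moeb_S: "is_moebius id" "is_moebius ii" "is_moebius sp" "is_moebius sm"
proof -
  have "id = moebius_app 1 0 0 1" by (rule ext, case_tac x) (simp_all add: moebius_app_def)
  then show "is_moebius id" unfolding is_moebius_def by (intro exI[of _ 1] exI[of _ 0]) auto
  show "is_moebius ii" unfolding is_moebius_def
    by (intro exI[of _ "-1"] exI[of _ 0] exI[of _ 0] exI[of _ 1]) simp
  show "is_moebius sp" unfolding is_moebius_def using a0
    by (intro exI[of _ 0] exI[of _ a] exI[of _ 1] exI[of _ 0]) simp
  show "is_moebius sm" unfolding is_moebius_def using a0
    by (intro exI[of _ 0] exI[of _ "-a"] exI[of _ 1] exI[of _ 0]) simp
qed

lemma deck_eq: assumes "2 \<le> n" shows "Deck (F n) = {id, ii, sp, sm}"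
proof
  show "Deck (F n) \<subseteq> {id, ii, sp, sm}" using deck_class[OF assms] by blast
  obtain m where n: "n = Suc (Suc m)" using assms by (metis add_2_eq_Suc le_Suc_ex)
  show "{id, ii, sp, sm} \<subseteq> Deck (F n)"
    unfolding n Deck_def using moeb_S F_sp F_sm F_ii[of "Suc m"] by auto
qed

lemma group_S: "group \<lparr>carrier = {id, ii, sp, sm}, monoid.mult = (\<circ>), one = id\<rparr>"
proof (rule groupI)
  fix x y assume "x \<in> carrier \<lparr>carrier = {id, ii, sp, sm}, monoid.mult = (\<circ>), one = id\<rparr>"
    "y \<in> carrier \<lparr>carrier = {id, ii, sp, sm}, monoid.mult = (\<circ>), one = id\<rparr>"
  then show "x \<otimes>\<^bsub>\<lparr>carrier = {id, ii, sp, sm}, monoid.mult = (\<circ>), one = id\<rparr>\<^esub> y \<in> carrier \<lparr>carrier = {id, ii, sp, sm}, monoid.mult = (\<circ>), one = id\<rparr>"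
    by (auto simp: T)
next
  show "\<one>\<^bsub>\<lparr>carrier = {id, ii, sp, sm}, monoid.mult = (\<circ>), one = id\<rparr>\<^esub> \<in> carrier \<lparr>carrier = {id, ii, sp, sm}, monoid.mult = (\<circ>), one = id\<rparr>"
    by simp
next
  fix x y z show "x \<otimes>\<^bsub>\<lparr>carrier = {id, ii, sp, sm}, monoid.mult = (\<circ>), one = id\<rparr>\<^esub> y \<otimes>\<^bsub>\<lparr>carrier = {id, ii, sp, sm}, monoid.mult = (\<circ>), one = id\<rparr>\<^esub> z =
      x \<otimes>\<^bsub>\<lparr>carrier = {id, ii, sp, sm}, monoid.mult = (\<circ>), one = id\<rparr>\<^esub> (y \<otimes>\<^bsub>\<lparr>carrier = {id, ii, sp, sm}, monoid.mult = (\<circ>), one = id\<rparr>\<^esub> z)"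
    by (simp add: o_assoc)
next
  fix x show "\<one>\<^bsub>\<lparr>carrier = {id, ii, sp, sm}, monoid.mult = (\<circ>), one = id\<rparr>\<^esub> \<otimes>\<^bsub>\<lparr>carrier = {id, ii, sp, sm}, monoid.mult = (\<circ>), one = id\<rparr>\<^esub> x = x"
    by simp
next
  fix x assume "x \<in> carrier \<lparr>carrier = {id, ii, sp, sm}, monoid.mult = (\<circ>), one = id\<rparr>"
  then show "\<exists>y\<in>carrier \<lparr>carrier = {id, ii, sp, sm}, monoid.mult = (\<circ>), one = id\<rparr>.
     y \<otimes>\<^bsub>\<lparr>carrier = {id, ii, sp, sm}, monoid.mult = (\<circ>), one = id\<rparr>\<^esub> x = \<one>\<^bsub>\<lparr>carrier = {id, ii, sp, sm}, monoid.mult = (\<circ>), one = id\<rparr>\<^esub>"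
    by (auto simp: T intro: bexI[of _ x])
qed

definition hV :: "(sphere \<Rightarrow> sphere) \<Rightarrow> bool \<times> bool" where
  "hV t = (t = ii \<or> t = sm, t = sp \<or> t = sm)"

lemma iso_S: "hV \<in> iso \<lparr>carrier = {id, ii, sp, sm}, monoid.mult = (\<circ>), one = id\<rparr> V4"
proof -
  have hv: "hV id = (False, False)" "hV ii = (True, False)" "hV sp = (False, True)" "hV sm = (True, True)"
    by (simp_all add: hV_def dists)
  have hom: "hV \<in> hom \<lparr>carrier = {id, ii, sp, sm}, monoid.mult = (\<circ>), one = id\<rparr> V4"
    unfolding hom_def V4_def by (auto simp: T hv)
  have inj: "inj_on hV {id, ii, sp, sm}" unfolding inj_on_def by (auto simp: hv)
  have "hV ` {id, ii, sp, sm} = UNIV" by (auto simp: hv image_iff)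
  with inj have "bij_betw hV {id, ii, sp, sm} UNIV" by (simp add: bij_betw_def)
  with hom show ?thesis unfolding iso_def V4_def by simp
qed

end

theorem mainTheorem17:
  fixes a :: complex
  assumes "a \<noteq> 0" and "a \<noteq> 1" and "a \<noteq> -1"
  shows "(\<forall>k::nat. k \<ge> 2 \<longrightarrow> group (Deck_group ((f_map a) ^^ k)) \<and> Deck_group ((f_map a) ^^ k) \<cong> V4)
         \<and> Deck ((f_map a) ^^ 2) =
             {id, moebius_app (-1) 0 0 1, moebius_app 0 a 1 0, moebius_app 0 (-a) 1 0}"
proof -
  interpret fa a using assms by unfold_locales
  have dg: "Deck_group ((f_map a) ^^ k) = \<lparr>carrier = {id, ii, sp, sm}, monoid.mult = (\<circ>), one = id\<rparr>"
    if "k \<ge> 2" for k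
    using deck_eq[OF that] by (simp add: Deck_group_def)
  show ?thesis
  proof (intro conjI allI impI)
    fix k :: nat assume k: "k \<ge> 2"
    show "group (Deck_group ((f_map a) ^^ k))" using group_S by (simp add: dg[OF k])
    show "Deck_group ((f_map a) ^^ k) \<cong> V4" using iso_S unfolding is_iso_def dg[OF k] by blast
  next
    show "Deck ((f_map a) ^^ 2) = {id, moebius_app (-1) 0 0 1, moebius_app 0 a 1 0, moebius_app 0 (-a) 1 0}"
      by (rule deck_eq) simp
  qed
qed



end
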